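(* Let $|\Phi^+\rangle=(|00\rangle+|11\rangle)/\sqrt2$ and $|\Psi^+\rangle=(|01\rangle+|10\rangle)/\sqrt2$. Under homogeneous two-qubit amplitude damping $\mathcal E_\gamma\otimes\mathcal E_\gamma$, $\gamma\in[0,1]$, $$\mathcal R\bigl((\mathcal E_\gamma\otimes\mathcal E_\gamma)(|\Phi^+\rangle\langle\Phi^+|)\bigr)=1+\gamma(1-\gamma),\qquad \mathcal R\bigl((\mathcal E_\gamma\otimes\mathcal E_\gamma)(|\Psi^+\rangle\langle\Psi^+|)\bigr)=1,$$ while the Wootters concurrences of these two states are $(1-\gamma)^2$ and $1-\gamma$ respectively.
   Context: $\mathcal E_\gamma$ is the single-qubit amplitude-damping channel with Kraus operators $E_0=|0\rangle\langle0|+\sqrt{1-\gamma}|1\rangle\langle1|$, $E_1=\sqrt\gamma|0\rangle\langle1|$. The robustness of magic is $\mathcal R(\rho)=\min\{\sum_j|q_j|:\rho=\sum_jq_j\sigma_j,\ q_j\in\mathbb R,\ \sigma_j\in\mathcal S\}$, where $\mathcal S$ is the two-qubit stabilizer polytope (convex hull of pure states $C|00\rangle$, $C$ a two-qubit Clifford unitary). *)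

theory Defs
  imports "HOL-Analysis.Analysis" "HOL-Computational_Algebra.Polynomial"
begin

text \<open>Single-qubit operators: complex 2x2 matrices indexed by the type 2 (basis 0,1).
Two-qubit operators: complex matrices indexed by 2 \<times> 2 (basis |ab> = (a,b)).\<close>

type_synonym qvec = "complex ^ 2"
type_synonym qmat = "complex ^ 2 ^ 2"
type_synonym qqvec = "complex ^ (2 \<times> 2)"
type_synonym qqmat = "complex ^ (2 \<times> 2) ^ (2 \<times> 2)"

definition adj :: "complex ^ 'n ^ 'm \<Rightarrow> complex ^ 'm ^ 'n" where
  "adj A = (\<chi> i j. cnj (A $ j $ i))"

definition cconj :: "complex ^ 'n ^ 'm \<Rightarrow> complex ^ 'n ^ 'm" where
  "cconj A = (\<chi> i j. cnj (A $ i $ j))"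

definition smat :: "complex \<Rightarrow> complex ^ 'n ^ 'm \<Rightarrow> complex ^ 'n ^ 'm" where
  "smat c A = (\<chi> i j. c * A $ i $ j)"

definition kron :: "qmat \<Rightarrow> qmat \<Rightarrow> qqmat" where
  "kron A B = (\<chi> ij kl. A $ fst ij $ fst kl * B $ snd ij $ snd kl)"

definition outer :: "complex ^ 'n \<Rightarrow> complex ^ 'n ^ 'n" where
  "outer v = (\<chi> i j. v $ i * cnj (v $ j))"

definition unitary :: "complex ^ 'n ^ 'n \<Rightarrow> bool" where
  "unitary U \<longleftrightarrow> U ** adj U = mat 1 \<and> adj U ** U = mat 1"

definition pI :: qmat where "pI = mat 1"
definition pX :: qmat where "pX = (\<chi> i j. if i \<noteq> j then 1 else 0)"
definition pY :: qmat where
  "pY = (\<chi> i j. if i = 0 \<and> j = 1 then - \<i> else if i = 1 \<and> j = 0 then \<i> else 0)"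
definition pZ :: qmat where
  "pZ = (\<chi> i j. if i = j then (if i = 0 then 1 else -1) else 0)"

definition pauli_group2 :: "qqmat set" where
  "pauli_group2 = {smat c (kron P Q) | c P Q.
      c \<in> {1, -1, \<i>, -\<i>} \<and> P \<in> {pI, pX, pY, pZ} \<and> Q \<in> {pI, pX, pY, pZ}}"

definition clifford2 :: "qqmat \<Rightarrow> bool" where
  "clifford2 U \<longleftrightarrow> unitary U \<and> (\<forall>P \<in> pauli_group2. U ** P ** adj U \<in> pauli_group2)"

definition ket00 :: qqvec where
  "ket00 = (\<chi> ab. if ab = (0, 0) then 1 else 0)"

definition stab_polytope :: "qqmat set" where
  "stab_polytope = convex hull {outer (U *v ket00) | U. clifford2 U}"

text \<open>Robustness of magic (the infimum, which is attained, over real affine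
decompositions into stabilizer states).\<close>
definition robustness :: "qqmat \<Rightarrow> real" where
  "robustness \<rho> = Inf {(\<Sum>\<sigma>\<in>F. \<bar>q \<sigma>\<bar>) | F q.
      finite F \<and> F \<subseteq> stab_polytope \<and> \<rho> = (\<Sum>\<sigma>\<in>F. q \<sigma> *\<^sub>R \<sigma>)}"

definition AD_kraus :: "real \<Rightarrow> nat \<Rightarrow> qmat" where
  "AD_kraus \<gamma> k = (if k = 0
     then (\<chi> i j. if i = 0 \<and> j = 0 then 1 else if i = 1 \<and> j = 1 then complex_of_real (sqrt (1 - \<gamma>)) else 0)
     else (\<chi> i j. if i = 0 \<and> j = 1 then complex_of_real (sqrt \<gamma>) else 0))"

definition AD2 :: "real \<Rightarrow> qqmat \<Rightarrow> qqmat" where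
  "AD2 \<gamma> \<rho> = (\<Sum>a<2. \<Sum>b<2.
      kron (AD_kraus \<gamma> a) (AD_kraus \<gamma> b) ** \<rho> ** adj (kron (AD_kraus \<gamma> a) (AD_kraus \<gamma> b)))"

definition Phi_plus :: qqvec where
  "Phi_plus = (\<chi> ab. if ab = (0, 0) \<or> ab = (1, 1) then complex_of_real (1 / sqrt 2) else 0)"

definition Psi_plus :: qqvec where
  "Psi_plus = (\<chi> ab. if ab = (0, 1) \<or> ab = (1, 0) then complex_of_real (1 / sqrt 2) else 0)"

text \<open>Wootters concurrence: with \<rho>~ = (Y\<otimes>Y) \<rho>* (Y\<otimes>Y), let \<lambda>1 \<ge> ... \<ge> \<lambda>4 be the
square roots of the eigenvalues (with multiplicity, roots of the characteristic
polynomial) of \<rho>\<rho>~; then C = max 0 (\<lambda>1 - \<lambda>2 - \<lambda>3 - \<lambda>4).\<close>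
definition charpoly :: "complex ^ 'n ^ 'n \<Rightarrow> complex poly" where
  "charpoly A = det (\<chi> i j. (if i = j then [:0, 1:] else 0) - [:A $ i $ j:])"

definition spin_flip :: "qqmat \<Rightarrow> qqmat" where
  "spin_flip \<rho> = kron pY pY ** cconj \<rho> ** kron pY pY"

definition concurrence :: "qqmat \<Rightarrow> real" where
  "concurrence \<rho> = (let ls = rev (sorted_list_of_multiset
        (image_mset (\<lambda>z. sqrt (Re z)) (proots (charpoly (\<rho> ** spin_flip \<rho>)))))
     in max 0 (ls ! 0 - ls ! 1 - ls ! 2 - ls ! 3))"

end

theory Submission
  imports Defs
begin
lemma two_eq_zero_2[simp]: "(2::2) = 0" by simp
lemma zero_neq_one_2[simp]: "(0::2) \<noteq> 1" "(1::2) \<noteq> 0" by simp_all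
lemma UNIV_2': "(UNIV::2 set) = {0,1}"
  using exhaust_2 by auto
lemma UNIV_22: "(UNIV::(2\<times>2) set) = {(0,0),(0,1),(1,0),(1,1)}"
proof -
  have "(UNIV::(2\<times>2) set) = (UNIV::2 set) \<times> (UNIV::2 set)" by simp
  also have "\<dots> = {(0,0),(0,1),(1,0),(1,1)}" unfolding UNIV_2' by auto
  finally show ?thesis .
qed
lemma sum_UNIV_2: "sum f (UNIV::2 set) = f 0 + f 1"
  by (simp add: UNIV_2')
lemma sum_UNIV_22: "sum f (UNIV::(2\<times>2) set) = f (0,0) + f (0,1) + f (1,0) + f (1,1)"
  by (simp add: UNIV_22 algebra_simps)
lemma all_2: "(\<forall>i::2. P i) \<longleftrightarrow> P 0 \<and> P 1"
  by (metis exhaust_2 two_eq_zero_2)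
lemma all_22: "(\<forall>i::2\<times>2. P i) \<longleftrightarrow> P (0,0) \<and> P (0,1) \<and> P (1,0) \<and> P (1,1)"
  by (metis UNIV_22 UNIV_I insertE empty_iff)

lemmas mat_simps = matrix_matrix_mult_def adj_def smat_def kron_def outer_def matrix_vector_mult_def
  mat_def cconj_def sum_UNIV_2 sum_UNIV_22 pI_def pX_def pY_def pZ_def

lemma meq2: "(A::'a^2^2) = B \<longleftrightarrow> A$0$0 = B$0$0 \<and> A$0$1 = B$0$1 \<and> A$1$0 = B$1$0 \<and> A$1$1 = B$1$1"
  by (simp add: vec_eq_iff all_2)
lemma meq4: "(A::'a^(2\<times>2)^(2\<times>2)) = B \<longleftrightarrow> A$ (0,0) $ (0,0) = B $ (0,0) $ (0,0) \<and> A$ (0,0) $ (0,1) = B $ (0,0) $ (0,1) \<and> A$ (0,0) $ (1,0) = B $ (0,0) $ (1,0) \<and> A$ (0,0) $ (1,1) = B $ (0,0) $ (1,1) \<and> A$ (0,1) $ (0,0) = B $ (0,1) $ (0,0) \<and> A$ (0,1) $ (0,1) = B $ (0,1) $ (0,1) \<and> A$ (0,1) $ (1,0) = B $ (0,1) $ (1,0) \<and> A$ (0,1) $ (1,1) = B $ (0,1) $ (1,1) \<and> A$ (1,0) $ (0,0) = B $ (1,0) $ (0,0) \<and> A$ (1,0) $ (0,1) = B $ (1,0) $ (0,1) \<and> A$ (1,0) $ (1,0) = B $ (1,0) $ (1,0) \<and> A$ (1,0) $ (1,1) = B $ (1,0) $ (1,1) \<and> A$ (1,1) $ (0,0) = B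 $ (1,1) $ (0,0) \<and> A$ (1,1) $ (0,1) = B $ (1,1) $ (0,1) \<and> A$ (1,1) $ (1,0) = B $ (1,1) $ (1,0) \<and> A$ (1,1) $ (1,1) = B $ (1,1) $ (1,1)"
  unfolding vec_eq_iff all_22 by simp


definition idx :: "2 \<Rightarrow> nat" where "idx a = (if a = 0 then 0 else 1)"
lemma idx_simps[simp]: "idx 0 = 0" "idx 1 = 1" by (simp_all add: idx_def)
definition mk4 :: "complex list list \<Rightarrow> qqmat" where
  "mk4 L = (\<chi> i j. L ! (2 * idx (fst i) + idx (snd i)) ! (2 * idx (fst j) + idx (snd j)))"
lemma mk4_nth[simp]: "mk4 L $ (a,b) $ (c,d) = L ! (2 * idx a + idx b) ! (2 * idx c + idx d)"
  by (simp add: mk4_def)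

definition hh :: complex where "hh = complex_of_real (1 / sqrt 2)"
lemma hh_simps[simp]: "hh * hh = 1/2" "hh * (hh * x) = x / 2" "cnj hh = hh"
proof -
  show "hh * hh = 1/2"
  proof -
    have "hh * hh = complex_of_real ((1 / sqrt 2) * (1 / sqrt 2))" by (simp only: hh_def of_real_mult)
    also have "(1 / sqrt 2) * (1 / sqrt 2) = (1/2::real)" by (simp add: divide_simps)
    finally show ?thesis by simp
  qed
  then show "hh * (hh * x) = x / 2" by (metis mult.assoc mult.commute divide_inverse inverse_eq_divide mult_1)
  show "cnj hh = hh" by (simp add: hh_def)
qed

lemma smat_mult_right: "A ** smat c B = smat c (A ** B)"
  by (simp add: vec_eq_iff smat_def matrix_matrix_mult_def sum_distrib_left mult_ac)
lemma smat_mult_left: "smat c A ** B = smat c (A ** B)"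
  by (simp add: vec_eq_iff smat_def matrix_matrix_mult_def sum_distrib_left mult_ac)
lemma smat_smat: "smat c (smat d A) = smat (c * d) A"
  by (simp add: vec_eq_iff smat_def mult_ac)

lemma pgI: "c \<in> {1,-1,\<i>,-\<i>} \<Longrightarrow> P \<in> {pI,pX,pY,pZ} \<Longrightarrow> Q \<in> {pI,pX,pY,pZ} \<Longrightarrow> smat c (kron P Q) \<in> pauli_group2"
  unfolding pauli_group2_def by blast

lemma clifford_intro:
  assumes u: "unitary U"
    and h: "\<And>A B. A \<in> {pI,pX,pY,pZ} \<Longrightarrow> B \<in> {pI,pX,pY,pZ} \<Longrightarrow> U ** kron A B ** adj U \<in> pauli_group2"
  shows "clifford2 U"
  unfolding clifford2_def
proof (intro conjI ballI u)
  fix P assume "P \<in> pauli_group2"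
  then obtain c A B where P: "P = smat c (kron A B)" and c: "c \<in> {1,-1,\<i>,-\<i>}"
    and A: "A \<in> {pI,pX,pY,pZ}" and B: "B \<in> {pI,pX,pY,pZ}"
    unfolding pauli_group2_def by blast
  have "U ** kron A B ** adj U \<in> pauli_group2" using h A B by blast
  then obtain c' A' B' where e: "U ** kron A B ** adj U = smat c' (kron A' B')" and c': "c' \<in> {1,-1,\<i>,-\<i>}"
    and A': "A' \<in> {pI,pX,pY,pZ}" and B': "B' \<in> {pI,pX,pY,pZ}"
    unfolding pauli_group2_def by blast
  have "U ** P ** adj U = smat (c * c') (kron A' B')"
    unfolding P smat_mult_right smat_mult_left e smat_smat ..
  moreover have "c * c' \<in> {1,-1,\<i>,-\<i>}" using c c' by auto
  ultimately show "U ** P ** adj U \<in> pauli_group2" using pgI A' B' by simp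
qed

definition B1 :: qqmat where "B1 = mk4 [[hh,0,hh,0],[0,hh,0,hh],[0,hh,0,-hh],[hh,0,-hh,0]]"

definition B2 :: qqmat where "B2 = mk4 [[0,hh,0,hh],[hh,0,hh,0],[hh,0,-hh,0],[0,hh,0,-hh]]"

lemma cliff_U00: "clifford2 (kron pI pI)"
proof (rule clifford_intro)
  show "unitary (kron pI pI)" by (simp add: unitary_def meq4 mat_simps )
  have e1: "(kron pI pI) ** kron pI pI ** adj (kron pI pI) = smat (1) (kron pI pI)" by (simp add: meq4 mat_simps )
  have e2: "(kron pI pI) ** kron pI pX ** adj (kron pI pI) = smat (1) (kron pI pX)" by (simp add: meq4 mat_simps )
  have e3: "(kron pI pI) ** kron pI pY ** adj (kron pI pI) = smat (1) (kron pI pY)" by (simp add: meq4 mat_simps )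
  have e4: "(kron pI pI) ** kron pI pZ ** adj (kron pI pI) = smat (1) (kron pI pZ)" by (simp add: meq4 mat_simps )
  have e5: "(kron pI pI) ** kron pX pI ** adj (kron pI pI) = smat (1) (kron pX pI)" by (simp add: meq4 mat_simps )
  have e6: "(kron pI pI) ** kron pX pX ** adj (kron pI pI) = smat (1) (kron pX pX)" by (simp add: meq4 mat_simps )
  have e7: "(kron pI pI) ** kron pX pY ** adj (kron pI pI) = smat (1) (kron pX pY)" by (simp add: meq4 mat_simps )
  have e8: "(kron pI pI) ** kron pX pZ ** adj (kron pI pI) = smat (1) (kron pX pZ)" by (simp add: meq4 mat_simps )
  have e9: "(kron pI pI) ** kron pY pI ** adj (kron pI pI) = smat (1) (kron pY pI)" by (simp add: meq4 mat_simps )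
  have e10: "(kron pI pI) ** kron pY pX ** adj (kron pI pI) = smat (1) (kron pY pX)" by (simp add: meq4 mat_simps )
  have e11: "(kron pI pI) ** kron pY pY ** adj (kron pI pI) = smat (1) (kron pY pY)" by (simp add: meq4 mat_simps )
  have e12: "(kron pI pI) ** kron pY pZ ** adj (kron pI pI) = smat (1) (kron pY pZ)" by (simp add: meq4 mat_simps )
  have e13: "(kron pI pI) ** kron pZ pI ** adj (kron pI pI) = smat (1) (kron pZ pI)" by (simp add: meq4 mat_simps )
  have e14: "(kron pI pI) ** kron pZ pX ** adj (kron pI pI) = smat (1) (kron pZ pX)" by (simp add: meq4 mat_simps )
  have e15: "(kron pI pI) ** kron pZ pY ** adj (kron pI pI) = smat (1) (kron pZ pY)" by (simp add: meq4 mat_simps )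
  have e16: "(kron pI pI) ** kron pZ pZ ** adj (kron pI pI) = smat (1) (kron pZ pZ)" by (simp add: meq4 mat_simps )
  fix A B assume "A \<in> {pI,pX,pY,pZ}" "B \<in> {pI,pX,pY,pZ}"
  then show "(kron pI pI) ** kron A B ** adj (kron pI pI) \<in> pauli_group2"
    by (auto simp only: insert_iff empty_iff e1 e2 e3 e4 e5 e6 e7 e8 e9 e10 e11 e12 e13 e14 e15 e16 intro!: pgI)
qed

lemma cliff_U01: "clifford2 (kron pI pX)"
proof (rule clifford_intro)
  show "unitary (kron pI pX)" by (simp add: unitary_def meq4 mat_simps )
  have e1: "(kron pI pX) ** kron pI pI ** adj (kron pI pX) = smat (1) (kron pI pI)" by (simp add: meq4 mat_simps )
  have e2: "(kron pI pX) ** kron pI pX ** adj (kron pI pX) = smat (1) (kron pI pX)" by (simp add: meq4 mat_simps )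
  have e3: "(kron pI pX) ** kron pI pY ** adj (kron pI pX) = smat (-1) (kron pI pY)" by (simp add: meq4 mat_simps )
  have e4: "(kron pI pX) ** kron pI pZ ** adj (kron pI pX) = smat (-1) (kron pI pZ)" by (simp add: meq4 mat_simps )
  have e5: "(kron pI pX) ** kron pX pI ** adj (kron pI pX) = smat (1) (kron pX pI)" by (simp add: meq4 mat_simps )
  have e6: "(kron pI pX) ** kron pX pX ** adj (kron pI pX) = smat (1) (kron pX pX)" by (simp add: meq4 mat_simps )
  have e7: "(kron pI pX) ** kron pX pY ** adj (kron pI pX) = smat (-1) (kron pX pY)" by (simp add: meq4 mat_simps )
  have e8: "(kron pI pX) ** kron pX pZ ** adj (kron pI pX) = smat (-1) (kron pX pZ)" by (simp add: meq4 mat_simps )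
  have e9: "(kron pI pX) ** kron pY pI ** adj (kron pI pX) = smat (1) (kron pY pI)" by (simp add: meq4 mat_simps )
  have e10: "(kron pI pX) ** kron pY pX ** adj (kron pI pX) = smat (1) (kron pY pX)" by (simp add: meq4 mat_simps )
  have e11: "(kron pI pX) ** kron pY pY ** adj (kron pI pX) = smat (-1) (kron pY pY)" by (simp add: meq4 mat_simps )
  have e12: "(kron pI pX) ** kron pY pZ ** adj (kron pI pX) = smat (-1) (kron pY pZ)" by (simp add: meq4 mat_simps )
  have e13: "(kron pI pX) ** kron pZ pI ** adj (kron pI pX) = smat (1) (kron pZ pI)" by (simp add: meq4 mat_simps )
  have e14: "(kron pI pX) ** kron pZ pX ** adj (kron pI pX) = smat (1) (kron pZ pX)" by (simp add: meq4 mat_simps )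
  have e15: "(kron pI pX) ** kron pZ pY ** adj (kron pI pX) = smat (-1) (kron pZ pY)" by (simp add: meq4 mat_simps )
  have e16: "(kron pI pX) ** kron pZ pZ ** adj (kron pI pX) = smat (-1) (kron pZ pZ)" by (simp add: meq4 mat_simps )
  fix A B assume "A \<in> {pI,pX,pY,pZ}" "B \<in> {pI,pX,pY,pZ}"
  then show "(kron pI pX) ** kron A B ** adj (kron pI pX) \<in> pauli_group2"
    by (auto simp only: insert_iff empty_iff e1 e2 e3 e4 e5 e6 e7 e8 e9 e10 e11 e12 e13 e14 e15 e16 intro!: pgI)
qed

lemma cliff_U10: "clifford2 (kron pX pI)"
proof (rule clifford_intro)
  show "unitary (kron pX pI)" by (simp add: unitary_def meq4 mat_simps )
  have e1: "(kron pX pI) ** kron pI pI ** adj (kron pX pI) = smat (1) (kron pI pI)" by (simp add: meq4 mat_simps )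
  have e2: "(kron pX pI) ** kron pI pX ** adj (kron pX pI) = smat (1) (kron pI pX)" by (simp add: meq4 mat_simps )
  have e3: "(kron pX pI) ** kron pI pY ** adj (kron pX pI) = smat (1) (kron pI pY)" by (simp add: meq4 mat_simps )
  have e4: "(kron pX pI) ** kron pI pZ ** adj (kron pX pI) = smat (1) (kron pI pZ)" by (simp add: meq4 mat_simps )
  have e5: "(kron pX pI) ** kron pX pI ** adj (kron pX pI) = smat (1) (kron pX pI)" by (simp add: meq4 mat_simps )
  have e6: "(kron pX pI) ** kron pX pX ** adj (kron pX pI) = smat (1) (kron pX pX)" by (simp add: meq4 mat_simps )
  have e7: "(kron pX pI) ** kron pX pY ** adj (kron pX pI) = smat (1) (kron pX pY)" by (simp add: meq4 mat_simps )
  have e8: "(kron pX pI) ** kron pX pZ ** adj (kron pX pI) = smat (1) (kron pX pZ)" by (simp add: meq4 mat_simps )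
  have e9: "(kron pX pI) ** kron pY pI ** adj (kron pX pI) = smat (-1) (kron pY pI)" by (simp add: meq4 mat_simps )
  have e10: "(kron pX pI) ** kron pY pX ** adj (kron pX pI) = smat (-1) (kron pY pX)" by (simp add: meq4 mat_simps )
  have e11: "(kron pX pI) ** kron pY pY ** adj (kron pX pI) = smat (-1) (kron pY pY)" by (simp add: meq4 mat_simps )
  have e12: "(kron pX pI) ** kron pY pZ ** adj (kron pX pI) = smat (-1) (kron pY pZ)" by (simp add: meq4 mat_simps )
  have e13: "(kron pX pI) ** kron pZ pI ** adj (kron pX pI) = smat (-1) (kron pZ pI)" by (simp add: meq4 mat_simps )
  have e14: "(kron pX pI) ** kron pZ pX ** adj (kron pX pI) = smat (-1) (kron pZ pX)" by (simp add: meq4 mat_simps )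
  have e15: "(kron pX pI) ** kron pZ pY ** adj (kron pX pI) = smat (-1) (kron pZ pY)" by (simp add: meq4 mat_simps )
  have e16: "(kron pX pI) ** kron pZ pZ ** adj (kron pX pI) = smat (-1) (kron pZ pZ)" by (simp add: meq4 mat_simps )
  fix A B assume "A \<in> {pI,pX,pY,pZ}" "B \<in> {pI,pX,pY,pZ}"
  then show "(kron pX pI) ** kron A B ** adj (kron pX pI) \<in> pauli_group2"
    by (auto simp only: insert_iff empty_iff e1 e2 e3 e4 e5 e6 e7 e8 e9 e10 e11 e12 e13 e14 e15 e16 intro!: pgI)
qed

lemma cliff_U11: "clifford2 (kron pX pX)"
proof (rule clifford_intro)
  show "unitary (kron pX pX)" by (simp add: unitary_def meq4 mat_simps )
  have e1: "(kron pX pX) ** kron pI pI ** adj (kron pX pX) = smat (1) (kron pI pI)" by (simp add: meq4 mat_simps )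
  have e2: "(kron pX pX) ** kron pI pX ** adj (kron pX pX) = smat (1) (kron pI pX)" by (simp add: meq4 mat_simps )
  have e3: "(kron pX pX) ** kron pI pY ** adj (kron pX pX) = smat (-1) (kron pI pY)" by (simp add: meq4 mat_simps )
  have e4: "(kron pX pX) ** kron pI pZ ** adj (kron pX pX) = smat (-1) (kron pI pZ)" by (simp add: meq4 mat_simps )
  have e5: "(kron pX pX) ** kron pX pI ** adj (kron pX pX) = smat (1) (kron pX pI)" by (simp add: meq4 mat_simps )
  have e6: "(kron pX pX) ** kron pX pX ** adj (kron pX pX) = smat (1) (kron pX pX)" by (simp add: meq4 mat_simps )
  have e7: "(kron pX pX) ** kron pX pY ** adj (kron pX pX) = smat (-1) (kron pX pY)" by (simp add: meq4 mat_simps )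
  have e8: "(kron pX pX) ** kron pX pZ ** adj (kron pX pX) = smat (-1) (kron pX pZ)" by (simp add: meq4 mat_simps )
  have e9: "(kron pX pX) ** kron pY pI ** adj (kron pX pX) = smat (-1) (kron pY pI)" by (simp add: meq4 mat_simps )
  have e10: "(kron pX pX) ** kron pY pX ** adj (kron pX pX) = smat (-1) (kron pY pX)" by (simp add: meq4 mat_simps )
  have e11: "(kron pX pX) ** kron pY pY ** adj (kron pX pX) = smat (1) (kron pY pY)" by (simp add: meq4 mat_simps )
  have e12: "(kron pX pX) ** kron pY pZ ** adj (kron pX pX) = smat (1) (kron pY pZ)" by (simp add: meq4 mat_simps )
  have e13: "(kron pX pX) ** kron pZ pI ** adj (kron pX pX) = smat (-1) (kron pZ pI)" by (simp add: meq4 mat_simps )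
  have e14: "(kron pX pX) ** kron pZ pX ** adj (kron pX pX) = smat (-1) (kron pZ pX)" by (simp add: meq4 mat_simps )
  have e15: "(kron pX pX) ** kron pZ pY ** adj (kron pX pX) = smat (1) (kron pZ pY)" by (simp add: meq4 mat_simps )
  have e16: "(kron pX pX) ** kron pZ pZ ** adj (kron pX pX) = smat (1) (kron pZ pZ)" by (simp add: meq4 mat_simps )
  fix A B assume "A \<in> {pI,pX,pY,pZ}" "B \<in> {pI,pX,pY,pZ}"
  then show "(kron pX pX) ** kron A B ** adj (kron pX pX) \<in> pauli_group2"
    by (auto simp only: insert_iff empty_iff e1 e2 e3 e4 e5 e6 e7 e8 e9 e10 e11 e12 e13 e14 e15 e16 intro!: pgI)
qed

lemma cliff_B1: "clifford2 (B1)"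
proof (rule clifford_intro)
  show "unitary (B1)" by (simp add: unitary_def meq4 mat_simps B1_def)
  have e1: "(B1) ** kron pI pI ** adj (B1) = smat (1) (kron pI pI)" by (simp add: meq4 mat_simps B1_def)
  have e2: "(B1) ** kron pI pX ** adj (B1) = smat (1) (kron pI pX)" by (simp add: meq4 mat_simps B1_def)
  have e3: "(B1) ** kron pI pY ** adj (B1) = smat (1) (kron pZ pY)" by (simp add: meq4 mat_simps B1_def)
  have e4: "(B1) ** kron pI pZ ** adj (B1) = smat (1) (kron pZ pZ)" by (simp add: meq4 mat_simps B1_def)
  have e5: "(B1) ** kron pX pI ** adj (B1) = smat (1) (kron pZ pI)" by (simp add: meq4 mat_simps B1_def)
  have e6: "(B1) ** kron pX pX ** adj (B1) = smat (1) (kron pZ pX)" by (simp add: meq4 mat_simps B1_def)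
  have e7: "(B1) ** kron pX pY ** adj (B1) = smat (1) (kron pI pY)" by (simp add: meq4 mat_simps B1_def)
  have e8: "(B1) ** kron pX pZ ** adj (B1) = smat (1) (kron pI pZ)" by (simp add: meq4 mat_simps B1_def)
  have e9: "(B1) ** kron pY pI ** adj (B1) = smat (-1) (kron pY pX)" by (simp add: meq4 mat_simps B1_def)
  have e10: "(B1) ** kron pY pX ** adj (B1) = smat (-1) (kron pY pI)" by (simp add: meq4 mat_simps B1_def)
  have e11: "(B1) ** kron pY pY ** adj (B1) = smat (1) (kron pX pZ)" by (simp add: meq4 mat_simps B1_def)
  have e12: "(B1) ** kron pY pZ ** adj (B1) = smat (-1) (kron pX pY)" by (simp add: meq4 mat_simps B1_def)
  have e13: "(B1) ** kron pZ pI ** adj (B1) = smat (1) (kron pX pX)" by (simp add: meq4 mat_simps B1_def)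
  have e14: "(B1) ** kron pZ pX ** adj (B1) = smat (1) (kron pX pI)" by (simp add: meq4 mat_simps B1_def)
  have e15: "(B1) ** kron pZ pY ** adj (B1) = smat (1) (kron pY pZ)" by (simp add: meq4 mat_simps B1_def)
  have e16: "(B1) ** kron pZ pZ ** adj (B1) = smat (-1) (kron pY pY)" by (simp add: meq4 mat_simps B1_def)
  fix A B assume "A \<in> {pI,pX,pY,pZ}" "B \<in> {pI,pX,pY,pZ}"
  then show "(B1) ** kron A B ** adj (B1) \<in> pauli_group2"
    by (auto simp only: insert_iff empty_iff e1 e2 e3 e4 e5 e6 e7 e8 e9 e10 e11 e12 e13 e14 e15 e16 intro!: pgI)
qed

lemma cliff_B2: "clifford2 (B2)"
proof (rule clifford_intro)
  show "unitary (B2)" by (simp add: unitary_def meq4 mat_simps B2_def)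
  have e1: "(B2) ** kron pI pI ** adj (B2) = smat (1) (kron pI pI)" by (simp add: meq4 mat_simps B2_def)
  have e2: "(B2) ** kron pI pX ** adj (B2) = smat (1) (kron pI pX)" by (simp add: meq4 mat_simps B2_def)
  have e3: "(B2) ** kron pI pY ** adj (B2) = smat (-1) (kron pZ pY)" by (simp add: meq4 mat_simps B2_def)
  have e4: "(B2) ** kron pI pZ ** adj (B2) = smat (-1) (kron pZ pZ)" by (simp add: meq4 mat_simps B2_def)
  have e5: "(B2) ** kron pX pI ** adj (B2) = smat (1) (kron pZ pI)" by (simp add: meq4 mat_simps B2_def)
  have e6: "(B2) ** kron pX pX ** adj (B2) = smat (1) (kron pZ pX)" by (simp add: meq4 mat_simps B2_def)
  have e7: "(B2) ** kron pX pY ** adj (B2) = smat (-1) (kron pI pY)" by (simp add: meq4 mat_simps B2_def)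
  have e8: "(B2) ** kron pX pZ ** adj (B2) = smat (-1) (kron pI pZ)" by (simp add: meq4 mat_simps B2_def)
  have e9: "(B2) ** kron pY pI ** adj (B2) = smat (-1) (kron pY pX)" by (simp add: meq4 mat_simps B2_def)
  have e10: "(B2) ** kron pY pX ** adj (B2) = smat (-1) (kron pY pI)" by (simp add: meq4 mat_simps B2_def)
  have e11: "(B2) ** kron pY pY ** adj (B2) = smat (-1) (kron pX pZ)" by (simp add: meq4 mat_simps B2_def)
  have e12: "(B2) ** kron pY pZ ** adj (B2) = smat (1) (kron pX pY)" by (simp add: meq4 mat_simps B2_def)
  have e13: "(B2) ** kron pZ pI ** adj (B2) = smat (1) (kron pX pX)" by (simp add: meq4 mat_simps B2_def)
  have e14: "(B2) ** kron pZ pX ** adj (B2) = smat (1) (kron pX pI)" by (simp add: meq4 mat_simps B2_def)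
  have e15: "(B2) ** kron pZ pY ** adj (B2) = smat (-1) (kron pY pZ)" by (simp add: meq4 mat_simps B2_def)
  have e16: "(B2) ** kron pZ pZ ** adj (B2) = smat (1) (kron pY pY)" by (simp add: meq4 mat_simps B2_def)
  fix A B assume "A \<in> {pI,pX,pY,pZ}" "B \<in> {pI,pX,pY,pZ}"
  then show "(B2) ** kron A B ** adj (B2) \<in> pauli_group2"
    by (auto simp only: insert_iff empty_iff e1 e2 e3 e4 e5 e6 e7 e8 e9 e10 e11 e12 e13 e14 e15 e16 intro!: pgI)
qed


lemma stab_in: "clifford2 U \<Longrightarrow> outer (U *v ket00) \<in> stab_polytope"
  unfolding stab_polytope_def by (rule hull_inc) blast

definition S00 :: qqmat where "S00 = mk4 [[1,0,0,0],[0,0,0,0],[0,0,0,0],[0,0,0,0]]"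
definition S01 :: qqmat where "S01 = mk4 [[0,0,0,0],[0,1,0,0],[0,0,0,0],[0,0,0,0]]"
definition S10 :: qqmat where "S10 = mk4 [[0,0,0,0],[0,0,0,0],[0,0,1,0],[0,0,0,0]]"
definition S11 :: qqmat where "S11 = mk4 [[0,0,0,0],[0,0,0,0],[0,0,0,0],[0,0,0,1]]"
definition SPhi :: qqmat where "SPhi = mk4 [[1/2,0,0,1/2],[0,0,0,0],[0,0,0,0],[1/2,0,0,1/2]]"
definition SPsi :: qqmat where "SPsi = mk4 [[0,0,0,0],[0,1/2,1/2,0],[0,1/2,1/2,0],[0,0,0,0]]"

lemmas vsimps = mat_simps ket00_def
lemma stabs: "S00 \<in> stab_polytope" "S01 \<in> stab_polytope" "S10 \<in> stab_polytope"
  "S11 \<in> stab_polytope" "SPhi \<in> stab_polytope" "SPsi \<in> stab_polytope"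
proof -
  have "outer (kron pI pI *v ket00) = S00" by (simp add: meq4 vsimps S00_def)
  then show "S00 \<in> stab_polytope" using stab_in[OF cliff_U00] by simp
  have "outer (kron pI pX *v ket00) = S01" by (simp add: meq4 vsimps S01_def)
  then show "S01 \<in> stab_polytope" using stab_in[OF cliff_U01] by simp
  have "outer (kron pX pI *v ket00) = S10" by (simp add: meq4 vsimps S10_def)
  then show "S10 \<in> stab_polytope" using stab_in[OF cliff_U10] by simp
  have "outer (kron pX pX *v ket00) = S11" by (simp add: meq4 vsimps S11_def)
  then show "S11 \<in> stab_polytope" using stab_in[OF cliff_U11] by simp
  have "outer (B1 *v ket00) = SPhi" by (simp add: meq4 vsimps SPhi_def B1_def)
  then show "SPhi \<in> stab_polytope" using stab_in[OF cliff_B1] by simp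
  have "outer (B2 *v ket00) = SPsi" by (simp add: meq4 vsimps SPsi_def B2_def)
  then show "SPsi \<in> stab_polytope" using stab_in[OF cliff_B2] by simp
qed

definition sq1 :: "real \<Rightarrow> complex" where "sq1 g = complex_of_real (sqrt (1 - g))"
definition sq2 :: "real \<Rightarrow> complex" where "sq2 g = complex_of_real (sqrt g)"

lemma sq_simps:
  assumes "0 \<le> g" "g \<le> 1"
  shows "sq1 g * sq1 g = 1 - complex_of_real g" "sq1 g * (sq1 g * x) = (1 - complex_of_real g) * x"
    "sq2 g * sq2 g = complex_of_real g" "sq2 g * (sq2 g * x) = complex_of_real g * x"
    "cnj (sq1 g) = sq1 g" "cnj (sq2 g) = sq2 g"
proof -
  show a: "sq1 g * sq1 g = 1 - complex_of_real g" unfolding sq1_def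
    by (metis assms(2) diff_ge_0_iff_ge of_real_1 of_real_diff of_real_mult real_sqrt_mult_self abs_of_nonneg)
  show b: "sq2 g * sq2 g = complex_of_real g" unfolding sq2_def
    by (metis assms(1) of_real_mult real_sqrt_mult_self abs_of_nonneg)
  show "sq1 g * (sq1 g * x) = (1 - complex_of_real g) * x" using a by (metis mult.assoc)
  show "sq2 g * (sq2 g * x) = complex_of_real g * x" using b by (metis mult.assoc)
  show "cnj (sq1 g) = sq1 g" "cnj (sq2 g) = sq2 g" by (simp_all add: sq1_def sq2_def)
qed

lemma AD2_expand: "AD2 g r =
   kron (AD_kraus g 0) (AD_kraus g 0) ** r ** adj (kron (AD_kraus g 0) (AD_kraus g 0)) +
   kron (AD_kraus g 0) (AD_kraus g 1) ** r ** adj (kron (AD_kraus g 0) (AD_kraus g 1)) +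
   kron (AD_kraus g 1) (AD_kraus g 0) ** r ** adj (kron (AD_kraus g 1) (AD_kraus g 0)) +
   kron (AD_kraus g 1) (AD_kraus g 1) ** r ** adj (kron (AD_kraus g 1) (AD_kraus g 1))"
  unfolding AD2_def by (simp add: numeral_2_eq_2 lessThan_Suc add.assoc)

lemma AD_kraus_simps: "AD_kraus g 0 = (\<chi> i j. if i = 0 \<and> j = 0 then 1 else if i = 1 \<and> j = 1 then sq1 g else 0)"
  "AD_kraus g 1 = (\<chi> i j. if i = 0 \<and> j = 1 then sq2 g else 0)"
  unfolding AD_kraus_def sq1_def sq2_def by simp_all

lemma Phi_hh: "Phi_plus = (\<chi> ab. if ab = (0, 0) \<or> ab = (1, 1) then hh else 0)"
  unfolding Phi_plus_def hh_def ..
lemma Psi_hh: "Psi_plus = (\<chi> ab. if ab = (0, 1) \<or> ab = (1, 0) then hh else 0)"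
  unfolding Psi_plus_def hh_def ..

definition rhoPhi :: "real \<Rightarrow> qqmat" where
  "rhoPhi g = mk4 [[of_real ((1+g^2)/2),0,0,of_real ((1-g)/2)],[0,of_real (g*(1-g)/2),0,0],
     [0,0,of_real (g*(1-g)/2),0],[of_real ((1-g)/2),0,0,of_real ((1-g)^2/2)]]"
definition rhoPsi :: "real \<Rightarrow> qqmat" where
  "rhoPsi g = mk4 [[of_real g,0,0,0],[0,of_real ((1-g)/2),of_real ((1-g)/2),0],
     [0,of_real ((1-g)/2),of_real ((1-g)/2),0],[0,0,0,0]]"

lemma AD2_Phi: assumes "0 \<le> g" "g \<le> 1" shows "AD2 g (outer Phi_plus) = rhoPhi g"
  unfolding AD2_expand AD_kraus_simps Phi_hh rhoPhi_def
  by (simp add: meq4 vsimps sq_simps[OF assms] mult_ac power2_eq_square)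

lemma AD2_Psi: assumes "0 \<le> g" "g \<le> 1" shows "AD2 g (outer Psi_plus) = rhoPsi g"
  unfolding AD2_expand AD_kraus_simps Psi_hh rhoPsi_def
  by (simp add: meq4 vsimps sq_simps[OF assms] mult_ac power2_eq_square)

section \<open>Robustness bounds\<close>

lemma rob_upper:
  assumes "finite F" "F \<subseteq> stab_polytope" "\<rho> = (\<Sum>\<sigma>\<in>F. q \<sigma> *\<^sub>R \<sigma>)"
  shows "robustness \<rho> \<le> (\<Sum>\<sigma>\<in>F. \<bar>q \<sigma>\<bar>)"
  unfolding robustness_def
proof (rule cInf_lower)
  show "(\<Sum>\<sigma>\<in>F. \<bar>q \<sigma>\<bar>) \<in> {\<Sum>\<sigma>\<in>F. \<bar>q \<sigma>\<bar> |F q. finite F \<and> F \<subseteq> stab_polytope \<and> \<rho> = (\<Sum>\<sigma>\<in>F. q \<sigma> *\<^sub>R \<sigma>)}"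
    using assms by blast
  show "bdd_below {\<Sum>\<sigma>\<in>F. \<bar>q \<sigma>\<bar> |F q. finite F \<and> F \<subseteq> stab_polytope \<and> \<rho> = (\<Sum>\<sigma>\<in>F. q \<sigma> *\<^sub>R \<sigma>)}"
    by (rule bdd_belowI[of _ 0]) (auto intro: sum_nonneg)
qed

definition trf :: "qqmat \<Rightarrow> qqmat \<Rightarrow> real" where "trf W M = Re (trace (W ** M))"

lemma trf_add: "trf W (A + B) = trf W A + trf W B"
  by (simp add: trf_def matrix_add_ldistrib trace_add)
lemma trf_zero: "trf W 0 = 0"
  by (simp add: trf_def trace_def matrix_matrix_mult_def)
lemma trf_scale: "trf W (c *\<^sub>R A) = c * trf W A"
proof -
  have "trace (W ** (c *\<^sub>R A)) = complex_of_real c * trace (W ** A)"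
    apply (simp add: trace_def matrix_matrix_mult_def)
    apply (simp add: scaleR_conv_of_real sum_distrib_left mult_ac)
    done
  then show ?thesis by (simp add: trf_def)
qed
lemma trf_sum: "finite F \<Longrightarrow> trf W (\<Sum>\<sigma>\<in>F. q \<sigma> *\<^sub>R \<sigma>) = (\<Sum>\<sigma>\<in>F. q \<sigma> * trf W \<sigma>)"
  by (induction F rule: finite_induct) (simp_all add: trf_zero trf_add trf_scale)

lemma rob_lower:
  assumes bnd: "\<And>\<sigma>. \<sigma> \<in> stab_polytope \<Longrightarrow> \<bar>trf W \<sigma>\<bar> \<le> 1"
    and ex: "finite F0" "F0 \<subseteq> stab_polytope" "\<rho> = (\<Sum>\<sigma>\<in>F0. q0 \<sigma> *\<^sub>R \<sigma>)"
  shows "trf W \<rho> \<le> robustness \<rho>"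
  unfolding robustness_def
proof (rule cInf_greatest)
  show "{\<Sum>\<sigma>\<in>F. \<bar>q \<sigma>\<bar> |F q. finite F \<and> F \<subseteq> stab_polytope \<and> \<rho> = (\<Sum>\<sigma>\<in>F. q \<sigma> *\<^sub>R \<sigma>)} \<noteq> {}"
    using ex by blast
  fix x assume "x \<in> {\<Sum>\<sigma>\<in>F. \<bar>q \<sigma>\<bar> |F q. finite F \<and> F \<subseteq> stab_polytope \<and> \<rho> = (\<Sum>\<sigma>\<in>F. q \<sigma> *\<^sub>R \<sigma>)}"
  then obtain F q where F: "finite F" "F \<subseteq> stab_polytope" "\<rho> = (\<Sum>\<sigma>\<in>F. q \<sigma> *\<^sub>R \<sigma>)"
    and x: "x = (\<Sum>\<sigma>\<in>F. \<bar>q \<sigma>\<bar>)" by blast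
  have "trf W \<rho> = (\<Sum>\<sigma>\<in>F. q \<sigma> * trf W \<sigma>)" using F trf_sum by simp
  also have "\<dots> \<le> (\<Sum>\<sigma>\<in>F. \<bar>q \<sigma>\<bar>)"
  proof (rule sum_mono)
    fix \<sigma> assume "\<sigma> \<in> F"
    then have "\<bar>trf W \<sigma>\<bar> \<le> 1" using F bnd by blast
    then have "\<bar>q \<sigma> * trf W \<sigma>\<bar> \<le> \<bar>q \<sigma>\<bar>"
      by (simp add: abs_mult mult_left_le)
    then show "q \<sigma> * trf W \<sigma> \<le> \<bar>q \<sigma>\<bar>" by linarith
  qed
  finally show "trf W \<rho> \<le> x" using x by simp
qed

lemma hull_bound:
  assumes "\<And>U. clifford2 U \<Longrightarrow> \<bar>trf W (outer (U *v ket00))\<bar> \<le> 1"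
  shows "\<And>\<sigma>. \<sigma> \<in> stab_polytope \<Longrightarrow> \<bar>trf W \<sigma>\<bar> \<le> 1"
proof -
  have "stab_polytope \<subseteq> {M. \<bar>trf W M\<bar> \<le> 1}"
    unfolding stab_polytope_def
  proof (rule hull_minimal)
    show "{outer (U *v ket00) |U. clifford2 U} \<subseteq> {M. \<bar>trf W M\<bar> \<le> 1}" using assms by blast
    show "convex {M. \<bar>trf W M\<bar> \<le> 1}"
      unfolding convex_def
    proof (intro ballI allI impI, simp add: trf_add trf_scale)
      fix x y u v assume x: "\<bar>trf W x\<bar> \<le> 1" and y: "\<bar>trf W y\<bar> \<le> 1" and uv: "0 \<le> u" "0 \<le> (v::real)" "u + v = 1"
      have "\<bar>u * trf W x + v * trf W y\<bar> \<le> u * \<bar>trf W x\<bar> + v * \<bar>trf W y\<bar>"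
        using uv by (simp add: abs_mult order_trans[OF abs_triangle_ineq])
      also have "\<dots> \<le> u * 1 + v * 1" using x y uv by (intro add_mono mult_left_mono) auto
      finally show "\<bar>u * trf W x + v * trf W y\<bar> \<le> 1" using uv by simp
    qed
  qed
  then show "\<And>\<sigma>. \<sigma> \<in> stab_polytope \<Longrightarrow> \<bar>trf W \<sigma>\<bar> \<le> 1" by blast
qed

lemma outer_mult: "outer (U *v v) = U ** outer v ** adj U"
proof -
  have "(U *v v) $ i * cnj ((U *v v) $ j) = (U ** outer v ** adj U) $ i $ j" for i j
  proof -
    have "(U *v v) $ i * cnj ((U *v v) $ j) = (\<Sum>k\<in>UNIV. U$i$k * v$k) * (\<Sum>l\<in>UNIV. cnj (U$j$l) * cnj (v$l))"
      by (simp add: matrix_vector_mult_def)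
    also have "\<dots> = (\<Sum>k\<in>UNIV. \<Sum>l\<in>UNIV. (U$i$k * v$k) * (cnj (U$j$l) * cnj (v$l)))"
      by (simp add: sum_product)
    also have "\<dots> = (\<Sum>l\<in>UNIV. \<Sum>k\<in>UNIV. (U$i$k * v$k) * (cnj (U$j$l) * cnj (v$l)))"
      by (rule sum.swap)
    also have "\<dots> = (U ** outer v ** adj U) $ i $ j"
      by (simp add: matrix_matrix_mult_def outer_def adj_def sum_distrib_right sum_distrib_left mult_ac)
    finally show ?thesis .
  qed
  then show ?thesis by (simp add: vec_eq_iff outer_def)
qed

lemma trace_pure:
  assumes "unitary U" shows "trace (outer (U *v ket00)) = 1"
proof -
  have "trace (outer (U *v ket00)) = trace ((U ** outer ket00) ** adj U)" by (simp add: outer_mult)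
  also have "\<dots> = trace (adj U ** (U ** outer ket00))" by (rule trace_mul_sym)
  also have "\<dots> = trace (outer ket00)" using assms
    by (simp add: matrix_mul_assoc unitary_def)
  also have "\<dots> = 1" by (simp add: trace_def sum_UNIV_22 vsimps)
  finally show ?thesis .
qed

lemma trace_bound: "\<sigma> \<in> stab_polytope \<Longrightarrow> \<bar>trf (mat 1) \<sigma>\<bar> \<le> 1"
  by (rule hull_bound) (simp add: trf_def trace_pure clifford2_def)


section \<open>Witness for the Phi state\<close>

definition Wphi :: qqmat where "Wphi = mk4 [[1,0,0,1],[0,1,0,0],[0,0,1,0],[1,0,0,-1]]"

lemma tW_vals:
  "trace (Wphi ** kron pI pI) = 2" "trace (Wphi ** kron pI pX) = 0" "trace (Wphi ** kron pI pY) = 0" "trace (Wphi ** kron pI pZ) = 2"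
  "trace (Wphi ** kron pX pI) = 0" "trace (Wphi ** kron pX pX) = 2" "trace (Wphi ** kron pX pY) = 0" "trace (Wphi ** kron pX pZ) = 0"
  "trace (Wphi ** kron pY pI) = 0" "trace (Wphi ** kron pY pX) = 0" "trace (Wphi ** kron pY pY) = -2" "trace (Wphi ** kron pY pZ) = 0"
  "trace (Wphi ** kron pZ pI) = 2" "trace (Wphi ** kron pZ pX) = 0" "trace (Wphi ** kron pZ pY) = 0" "trace (Wphi ** kron pZ pZ) = -2"
  by (simp_all add: trace_def Wphi_def mat_simps)

lemma trace_smat: "trace (W ** smat c M) = c * trace (W ** M)"
  unfolding smat_mult_right by (simp add: trace_def smat_def sum_distrib_left)

lemma smat_one: "smat 1 A = A" by (simp add: smat_def vec_eq_iff)
lemma id_eq: "kron pI pI = mat 1" by (simp add: meq4 mat_simps)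

definition Splus :: "qqmat set" where
  "Splus = {smat 1 (kron pI pI), smat 1 (kron pZ pI), smat 1 (kron pI pZ), smat (-1) (kron pZ pZ),
            smat 1 (kron pX pX), smat (-1) (kron pY pY)}"

lemma pauli_val:
  assumes "P \<in> pauli_group2"
  shows "(trf Wphi P = 2 \<and> P \<in> Splus) \<or> trf Wphi P = 0 \<or> trf Wphi P = -2"
proof -
  obtain c A B where P: "P = smat c (kron A B)" and c: "c \<in> {1,-1,\<i>,-\<i>}"
    and A: "A \<in> {pI,pX,pY,pZ}" and B: "B \<in> {pI,pX,pY,pZ}"
    using assms unfolding pauli_group2_def by blast
  show ?thesis using c A B unfolding P
    by (auto simp: trf_def trace_smat tW_vals Splus_def)
qed

lemma Splus_pairs:
  "trf Wphi ((smat 1 (kron pZ pI)) ** (smat 1 (kron pI pZ))) = -2"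
  "trf Wphi ((smat 1 (kron pZ pI)) ** (smat (-1) (kron pZ pZ))) = -2"
  "(smat 1 (kron pZ pI)) ** (smat 1 (kron pX pX)) \<noteq> (smat 1 (kron pX pX)) ** (smat 1 (kron pZ pI))"
  "(smat 1 (kron pZ pI)) ** (smat (-1) (kron pY pY)) \<noteq> (smat (-1) (kron pY pY)) ** (smat 1 (kron pZ pI))"
  "trf Wphi ((smat 1 (kron pI pZ)) ** (smat 1 (kron pZ pI))) = -2"
  "trf Wphi ((smat 1 (kron pI pZ)) ** (smat (-1) (kron pZ pZ))) = -2"
  "(smat 1 (kron pI pZ)) ** (smat 1 (kron pX pX)) \<noteq> (smat 1 (kron pX pX)) ** (smat 1 (kron pI pZ))"
  "(smat 1 (kron pI pZ)) ** (smat (-1) (kron pY pY)) \<noteq> (smat (-1) (kron pY pY)) ** (smat 1 (kron pI pZ))"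
  "trf Wphi ((smat (-1) (kron pZ pZ)) ** (smat 1 (kron pZ pI))) = -2"
  "trf Wphi ((smat (-1) (kron pZ pZ)) ** (smat 1 (kron pI pZ))) = -2"
  "trf Wphi ((smat (-1) (kron pZ pZ)) ** (smat 1 (kron pX pX))) = -2"
  "trf Wphi ((smat (-1) (kron pZ pZ)) ** (smat (-1) (kron pY pY))) = -2"
  "(smat 1 (kron pX pX)) ** (smat 1 (kron pZ pI)) \<noteq> (smat 1 (kron pZ pI)) ** (smat 1 (kron pX pX))"
  "(smat 1 (kron pX pX)) ** (smat 1 (kron pI pZ)) \<noteq> (smat 1 (kron pI pZ)) ** (smat 1 (kron pX pX))"
  "trf Wphi ((smat 1 (kron pX pX)) ** (smat (-1) (kron pZ pZ))) = -2"
  "trf Wphi ((smat 1 (kron pX pX)) ** (smat (-1) (kron pY pY))) = -2"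
  "(smat (-1) (kron pY pY)) ** (smat 1 (kron pZ pI)) \<noteq> (smat 1 (kron pZ pI)) ** (smat (-1) (kron pY pY))"
  "(smat (-1) (kron pY pY)) ** (smat 1 (kron pI pZ)) \<noteq> (smat 1 (kron pI pZ)) ** (smat (-1) (kron pY pY))"
  "trf Wphi ((smat (-1) (kron pY pY)) ** (smat (-1) (kron pZ pZ))) = -2"
  "trf Wphi ((smat (-1) (kron pY pY)) ** (smat 1 (kron pX pX))) = -2"
  by (simp_all add: smat_mult_left smat_mult_right smat_smat trf_def trace_smat trace_def Wphi_def meq4 mat_simps)

lemma Splus_prod:
  assumes "P \<in> Splus" "Q \<in> Splus" "P \<noteq> Q" "P \<noteq> mat 1" "Q \<noteq> mat 1" "P ** Q = Q ** P"
  shows "trf Wphi (P ** Q) = -2"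
  using assms unfolding Splus_def insert_iff empty_iff smat_one id_eq
  apply (elim disjE)
  apply (simp_all only: Splus_pairs[unfolded smat_one] simp_thms)
  done

lemma matrix_add_rdistrib: "((B + C) ** A) = (B ** A) + (C ** A)"
  by (simp add: vec_eq_iff matrix_matrix_mult_def distrib_right sum.distrib)

lemma conj_inj:
  assumes "unitary U" "U ** A ** adj U = U ** B ** adj U" shows "A = B"
proof -
  have "adj U ** (U ** A ** adj U) ** U = A" for A
  proof -
    have "adj U ** (U ** A ** adj U) ** U = (adj U ** U) ** A ** (adj U ** U)"
      by (simp add: matrix_mul_assoc)
    then show ?thesis using assms(1) by (simp add: unitary_def)
  qed
  note e = this
  have "A = adj U ** (U ** A ** adj U) ** U" by (simp only: e)
  also have "\<dots> = adj U ** (U ** B ** adj U) ** U" by (simp only: assms(2))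
  also have "\<dots> = B" by (simp only: e)
  finally show ?thesis .
qed

lemma pure_phi:
  assumes "clifford2 U"
  shows "\<bar>trf Wphi (outer (U *v ket00))\<bar> \<le> 1"
proof -
  have u: "unitary U" and cl: "\<And>P. P \<in> pauli_group2 \<Longrightarrow> U ** P ** adj U \<in> pauli_group2"
    using assms unfolding clifford2_def by auto
  define ZI where "ZI = kron pZ pI"
  define IZ where "IZ = kron pI pZ"
  define ZZ where "ZZ = kron pZ pZ"
  define P where "P = U ** ZI ** adj U"
  define Q where "Q = U ** IZ ** adj U"
  define R where "R = U ** ZZ ** adj U"
  have o: "outer ket00 = smat (1/4) (mat 1 + ZI + IZ + ZZ)"
    by (simp add: meq4 vsimps ZI_def IZ_def ZZ_def)
  have i1: "U ** mat 1 ** adj U = mat 1" using u by (simp add: unitary_def)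
  have "outer (U *v ket00) = smat (1/4) (U ** mat 1 ** adj U + P + Q + R)"
    unfolding outer_mult o smat_mult_right smat_mult_left P_def Q_def R_def
    by (simp add: matrix_add_ldistrib matrix_add_rdistrib)
  then have tv: "trf Wphi (outer (U *v ket00)) = (2 + trf Wphi P + trf Wphi Q + trf Wphi R) / 4"
  proof -
    assume eq: "outer (U *v ket00) = smat (1/4) (U ** mat 1 ** adj U + P + Q + R)"
    have "trf Wphi (outer (U *v ket00)) = Re ((1/4) * (trace (Wphi ** mat 1) + trace (Wphi ** P) + trace (Wphi ** Q) + trace (Wphi ** R)))"
      unfolding eq i1 trf_def trace_smat matrix_add_ldistrib trace_add ..
    also have "\<dots> = (2 + trf Wphi P + trf Wphi Q + trf Wphi R) / 4"
      using tW_vals(1) by (simp add: id_eq trf_def)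
    finally show ?thesis .
  qed
  have pg: "M \<in> {pI,pX,pY,pZ} \<Longrightarrow> N \<in> {pI,pX,pY,pZ} \<Longrightarrow> kron M N \<in> pauli_group2" for M N
    using pgI[of 1 M N] by (simp add: smat_one)
  have Pg: "P \<in> pauli_group2" "Q \<in> pauli_group2" "R \<in> pauli_group2"
    unfolding P_def Q_def R_def ZI_def IZ_def ZZ_def by (auto intro!: cl pg)
  have cm: "U ** A ** adj U ** (U ** B ** adj U) = U ** (A ** B) ** adj U" for A B
  proof -
    have "U ** A ** adj U ** (U ** B ** adj U) = U ** A ** (adj U ** U) ** B ** adj U" by (simp add: matrix_mul_assoc)
    also have "\<dots> = U ** (A ** B) ** adj U" using u by (simp add: unitary_def matrix_mul_assoc)
    finally show ?thesis .
  qed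
  have "ZI ** IZ = ZZ" "IZ ** ZI = ZZ" "ZI ** ZZ = IZ" "ZZ ** ZI = IZ" "IZ ** ZZ = ZI" "ZZ ** IZ = ZI"
    by (simp_all add: meq4 mat_simps ZI_def IZ_def ZZ_def)
  then have rel: "P ** Q = R" "Q ** P = R" "P ** R = Q" "R ** P = Q" "Q ** R = P" "R ** Q = P"
    unfolding P_def Q_def R_def cm by simp_all
  have "ZI \<noteq> IZ" "ZI \<noteq> ZZ" "IZ \<noteq> ZZ" "ZI \<noteq> mat 1" "IZ \<noteq> mat 1" "ZZ \<noteq> mat 1"
    by (simp_all add: meq4 mat_simps ZI_def IZ_def ZZ_def)
  then have ne: "P \<noteq> Q" "P \<noteq> R" "Q \<noteq> R" "P \<noteq> mat 1" "Q \<noteq> mat 1" "R \<noteq> mat 1"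
    using conj_inj[OF u, of ZI IZ] conj_inj[OF u, of ZI ZZ] conj_inj[OF u, of IZ ZZ]
      conj_inj[OF u, of ZI "mat 1"] conj_inj[OF u, of IZ "mat 1"] conj_inj[OF u, of ZZ "mat 1"] i1
    unfolding P_def Q_def R_def by auto
  have vP: "(trf Wphi P = 2 \<and> P \<in> Splus) \<or> trf Wphi P = 0 \<or> trf Wphi P = -2" by (rule pauli_val[OF Pg(1)])
  have vQ: "(trf Wphi Q = 2 \<and> Q \<in> Splus) \<or> trf Wphi Q = 0 \<or> trf Wphi Q = -2" by (rule pauli_val[OF Pg(2)])
  have vR: "(trf Wphi R = 2 \<and> R \<in> Splus) \<or> trf Wphi R = 0 \<or> trf Wphi R = -2" by (rule pauli_val[OF Pg(3)])
  have c1: "P \<in> Splus \<Longrightarrow> Q \<in> Splus \<Longrightarrow> trf Wphi R = -2"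
    using Splus_prod[of P Q] ne rel by simp
  have c2: "P \<in> Splus \<Longrightarrow> R \<in> Splus \<Longrightarrow> trf Wphi Q = -2"
    using Splus_prod[of P R] ne rel by simp
  have c3: "Q \<in> Splus \<Longrightarrow> R \<in> Splus \<Longrightarrow> trf Wphi P = -2"
    using Splus_prod[of Q R] ne rel by simp
  show ?thesis unfolding tv using vP vQ vR c1 c2 c3 by auto
qed

lemma phi_bound: "\<sigma> \<in> stab_polytope \<Longrightarrow> \<bar>trf Wphi \<sigma>\<bar> \<le> 1"
  by (rule hull_bound) (rule pure_phi)


section \<open>Robustness values\<close>

lemma S_ne:
  "S00 \<noteq> S01" "S01 \<noteq> S00"
  "S00 \<noteq> S10" "S10 \<noteq> S00"
  "S00 \<noteq> S11" "S11 \<noteq> S00"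
  "S00 \<noteq> SPhi" "SPhi \<noteq> S00"
  "S00 \<noteq> SPsi" "SPsi \<noteq> S00"
  "S01 \<noteq> S10" "S10 \<noteq> S01"
  "S01 \<noteq> S11" "S11 \<noteq> S01"
  "S01 \<noteq> SPhi" "SPhi \<noteq> S01"
  "S01 \<noteq> SPsi" "SPsi \<noteq> S01"
  "S10 \<noteq> S11" "S11 \<noteq> S10"
  "S10 \<noteq> SPhi" "SPhi \<noteq> S10"
  "S10 \<noteq> SPsi" "SPsi \<noteq> S10"
  "S11 \<noteq> SPhi" "SPhi \<noteq> S11"
  "S11 \<noteq> SPsi" "SPsi \<noteq> S11"
  "SPhi \<noteq> SPsi" "SPsi \<noteq> SPhi"
  by (simp_all add: meq4 S00_def S01_def S10_def S11_def SPhi_def SPsi_def)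

definition qPhi :: "real \<Rightarrow> qqmat \<Rightarrow> real" where
  "qPhi g \<sigma> = (if \<sigma> = S00 then g - g*(1-g)/2 else if \<sigma> = S01 then g*(1-g)/2
     else if \<sigma> = S10 then g*(1-g)/2 else if \<sigma> = S11 then -(g*(1-g)/2) else 1 - g)"

lemma decomp_Phi: "rhoPhi g = (\<Sum>\<sigma>\<in>{S00,S01,S10,S11,SPhi}. qPhi g \<sigma> *\<^sub>R \<sigma>)"
  apply (simp add: S_ne qPhi_def)
  apply (simp add: meq4 S00_def S01_def S10_def S11_def SPhi_def rhoPhi_def)
  apply (simp add: scaleR_conv_of_real algebra_simps power2_eq_square)
  apply (simp add: field_simps)
  done

lemma decomp_Psi: "rhoPsi g = (\<Sum>\<sigma>\<in>{S00,SPsi}. (if \<sigma> = S00 then g else 1 - g) *\<^sub>R \<sigma>)"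
  apply (simp add: S_ne)
  apply (simp add: meq4 S00_def SPsi_def rhoPsi_def)
  apply (simp add: scaleR_conv_of_real)
  done

lemma rob_Phi: assumes "0 \<le> g" "g \<le> 1" shows "robustness (rhoPhi g) = 1 + g * (1 - g)"
proof (rule antisym)
  have F: "finite {S00,S01,S10,S11,SPhi}" "{S00,S01,S10,S11,SPhi} \<subseteq> stab_polytope" using stabs by auto
  have "robustness (rhoPhi g) \<le> (\<Sum>\<sigma>\<in>{S00,S01,S10,S11,SPhi}. \<bar>qPhi g \<sigma>\<bar>)"
    by (rule rob_upper[OF F decomp_Phi])
  also have "\<dots> = 1 + g * (1 - g)"
  proof -
    have a: "0 \<le> g * (1 - g)" using assms by simp
    have b: "g*(1-g)/2 \<le> g" using assms by (simp add: field_simps mult_left_le)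
    show ?thesis using a b assms by (simp add: S_ne qPhi_def abs_of_nonneg algebra_simps)
  qed
  finally show "robustness (rhoPhi g) \<le> 1 + g * (1 - g)" .
  have "trf Wphi (rhoPhi g) \<le> robustness (rhoPhi g)"
    by (rule rob_lower[OF phi_bound F decomp_Phi])
  moreover have "trf Wphi (rhoPhi g) = 1 + g * (1 - g)"
    by (simp add: trf_def trace_def Wphi_def rhoPhi_def mat_simps algebra_simps power2_eq_square)
      (simp add: field_simps)
  ultimately show "1 + g * (1 - g) \<le> robustness (rhoPhi g)" by simp
qed

lemma rob_Psi: assumes "0 \<le> g" "g \<le> 1" shows "robustness (rhoPsi g) = 1"
proof (rule antisym)
  have F: "finite {S00,SPsi}" "{S00,SPsi} \<subseteq> stab_polytope" using stabs by auto
  have "robustness (rhoPsi g) \<le> (\<Sum>\<sigma>\<in>{S00,SPsi}. \<bar>(if \<sigma> = S00 then g else 1 - g)\<bar>)"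
    by (rule rob_upper[OF F decomp_Psi])
  also have "\<dots> = 1" using assms by (simp add: S_ne)
  finally show "robustness (rhoPsi g) \<le> 1" .
  have "trf (mat 1) (rhoPsi g) \<le> robustness (rhoPsi g)"
    by (rule rob_lower[OF trace_bound F decomp_Psi])
  moreover have "trf (mat 1) (rhoPsi g) = 1"
    by (simp add: trf_def trace_def rhoPsi_def mat_simps)
  ultimately show "1 \<le> robustness (rhoPsi g)" by simp
qed



lemma det4: "det (A::'a::comm_ring_1^(2\<times>2)^(2\<times>2)) = A$ (0,0) $ (0,0) * A$ (0,1) $ (0,1) * A$ (1,0) $ (1,0) * A$ (1,1) $ (1,1) - A$ (0,0) $ (0,0) * A$ (0,1) $ (0,1) * A$ (1,0) $ (1,1) * A$ (1,1) $ (1,0) - A$ (0,0) $ (0,0) * A$ (0,1) $ (1,0) * A$ (1,0) $ (0,1) * A$ (1,1) $ (1,1) + A$ (0,0) $ (0,0) * A$ (0,1) $ (1,0) * A$ (1,0) $ (1,1) * A$ (1,1) $ (0,1) + A$ (0,0) $ (0,0) * A$ (0,1) $ (1,1) * A$ (1,0) $ (0,1) * A$ (1,1) $ (1,0) - A$ (0,0) $ (0,0) * A$ (0,1) $ (1,1) * A$ (1,0) $ (1,0) * A$ (1,1) $ (0,1) - A$ (0,0) $ (0,1) * A$ (0,1) $ (0,0) * A$ (1,0) $ (1,0) * A$ (1,1) $ (1,1) + A$ (0,0) $ (0,1) * A$ (0,1) $ (0,0) * A$ (1,0) $ (1,1) * A$ (1,1) $ (1,0) + A$ (0,0) $ (0,1)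 * A$ (0,1) $ (1,0) * A$ (1,0) $ (0,0) * A$ (1,1) $ (1,1) - A$ (0,0) $ (0,1) * A$ (0,1) $ (1,0) * A$ (1,0) $ (1,1) * A$ (1,1) $ (0,0) - A$ (0,0) $ (0,1) * A$ (0,1) $ (1,1) * A$ (1,0) $ (0,0) * A$ (1,1) $ (1,0) + A$ (0,0) $ (0,1) * A$ (0,1) $ (1,1) * A$ (1,0) $ (1,0) * A$ (1,1) $ (0,0) + A$ (0,0) $ (1,0) * A$ (0,1) $ (0,0) * A$ (1,0) $ (0,1) * A$ (1,1) $ (1,1) - A$ (0,0) $ (1,0) * A$ (0,1) $ (0,0) * A$ (1,0) $ (1,1) * A$ (1,1) $ (0,1) - A$ (0,0) $ (1,0) * A$ (0,1) $ (0,1) * A$ (1,0) $ (0,0) * A$ (1,1) $ (1,1) + A$ (0,0) $ (1,0) * A$ (0,1) $ (0,1) * A$ (1,0) $ (1,1) * A$ (1,1) $ (0,0) + A$ (0,0) $ (1,0) * A$ (0,1) $ (1,1) * A$ (1,0) $ (0,0) * A$ (1,1) $ (0,1) - A$ (0,0) $ (1,0) * A$ (0,1) $ (1,1) * A$ (1,0) $ (0,1) * A$ (1,1) $ (0,0) - A$ (0,0) $ (1,1) * A$ (0,1) $ (0,0) * A$ (1,0) $ (0,1) * A$ (1,1) $ (1,0) + A$ (0,0) $ (1,1) * A$ (0,1) $ (0,0) * A$ (1,0) $ (1,0) * A$ (1,1) $ (0,1) + A$ (0,0) $ (1,1) * A$ (0,1) $ (0,1) * A$ (1,0) $ (0,0)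 * A$ (1,1) $ (1,0) - A$ (0,0) $ (1,1) * A$ (0,1) $ (0,1) * A$ (1,0) $ (1,0) * A$ (1,1) $ (0,0) - A$ (0,0) $ (1,1) * A$ (0,1) $ (1,0) * A$ (1,0) $ (0,0) * A$ (1,1) $ (0,1) + A$ (0,0) $ (1,1) * A$ (0,1) $ (1,0) * A$ (1,0) $ (0,1) * A$ (1,1) $ (0,0)"
proof -
  have f1: "finite {(0::2,1::2),(1,0),(1,1)}" "(0,0) \<notin> {(0::2,1::2),(1,0),(1,1)}" by auto
  have f2: "finite {(1::2,0::2),(1,1)}" "(0,1) \<notin> {(1::2,0::2),(1,1)}" by auto
  have f3: "finite {(1::2,1::2)}" "(1,0) \<notin> {(1::2,1::2)}" by auto
  show ?thesis
    unfolding det_def UNIV_22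
    unfolding sum_over_permutations_insert[OF f1]
    unfolding sum_over_permutations_insert[OF f2]
    unfolding sum_over_permutations_insert[OF f3]
    unfolding permutes_sing
    by (simp add: sign_swap_id permutation_swap_id permutation_compose sign_compose sign_id transpose_def algebra_simps)
qed


lemma conc4:
  fixes a b c d :: real
  assumes "b \<le> a" "c \<le> a" "d \<le> a"
  shows "(let ls = rev (sorted_list_of_multiset {#a,b,c,d#}) in max 0 (ls!0 - ls!1 - ls!2 - ls!3)) = max 0 (a - b - c - d)"
proof -
  define L where "L = sorted_list_of_multiset {#a,b,c,d#}"
  have mL: "mset L = {#a,b,c,d#}" unfolding L_def by simp
  have sL: "sorted L" unfolding L_def by simp
  have "length L = 4" using arg_cong[OF mL, of size] by simp
  then obtain x0 x1 x2 x3 where L: "L = [x0,x1,x2,x3]"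
    by (auto simp: length_Suc_conv numeral_eq_Suc)
  have ord: "x0 \<le> x1" "x1 \<le> x2" "x2 \<le> x3" using sL unfolding L by auto
  have sum: "x0 + x1 + x2 + x3 = a + b + c + d"
    using arg_cong[OF mL, of sum_mset] unfolding L by (simp add: algebra_simps)
  have st: "{x0,x1,x2,x3} = {a,b,c,d}"
    using arg_cong[OF mL, of set_mset] unfolding L by simp
  have "x3 \<in> {a,b,c,d}" using st by blast
  then have "x3 \<le> a" using assms by auto
  moreover have "a \<in> {x0,x1,x2,x3}" using st by blast
  then have "a \<le> x3" using ord by auto
  ultimately have "x3 = a" by simp
  then show ?thesis unfolding L_def[symmetric] L Let_def using sum by simp
qed

definition MPhi :: "real \<Rightarrow> qqmat" where
  "MPhi g = mk4 [[of_real ((1+g^2)/2 * ((1-g)^2/2) + ((1-g)/2)^2), 0, 0, of_real ((1+g^2)*(1-g)/2)],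
                 [0, of_real ((g*(1-g)/2)^2), 0, 0], [0, 0, of_real ((g*(1-g)/2)^2), 0],
                 [of_real ((1-g)^3/2), 0, 0, of_real ((1+g^2)/2 * ((1-g)^2/2) + ((1-g)/2)^2)]]"
definition MPsi :: "real \<Rightarrow> qqmat" where
  "MPsi g = mk4 [[0,0,0,0],[0, of_real ((1-g)^2/2), of_real ((1-g)^2/2), 0],
                 [0, of_real ((1-g)^2/2), of_real ((1-g)^2/2), 0], [0,0,0,0]]"

lemma MPhi_eq: "rhoPhi g ** spin_flip (rhoPhi g) = MPhi g"
  apply (simp add: spin_flip_def meq4 mat_simps rhoPhi_def MPhi_def)
  apply (simp add: algebra_simps power2_eq_square power3_eq_cube)
  done

lemma MPsi_eq: "rhoPsi g ** spin_flip (rhoPsi g) = MPsi g"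
  apply (simp add: spin_flip_def meq4 mat_simps rhoPsi_def MPsi_def)
  apply (simp add: algebra_simps power2_eq_square power3_eq_cube)
  done


definition mPhi1 :: "real \<Rightarrow> real" where "mPhi1 g = ((1-g) * sqrt (1+g^2) / 2 + (1-g)/2)^2"
definition mPhi2 :: "real \<Rightarrow> real" where "mPhi2 g = ((1-g) * sqrt (1+g^2) / 2 - (1-g)/2)^2"
definition mPhi3 :: "real \<Rightarrow> real" where "mPhi3 g = (g*(1-g)/2)^2"

lemma charpoly_X:
  "charpoly (mk4 [[p,0,0,q],[0,s,0,0],[0,0,s,0],[r,0,0,p]]) = [:p*p - q*r, -2*p, 1:] * [:-s,1:] * [:-s,1:]"
  unfolding charpoly_def det4
  apply (simp add: algebra_simps)
  done

lemma lin2: "[:-m1,1:] * [:-m2,1:] = [:m1*m2, -(m1+m2), 1::complex:]"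
  by (simp add: algebra_simps)

lemma charpoly_MPhi: "charpoly (MPhi g) = [:-of_real (mPhi1 g),1:] * [:-of_real (mPhi2 g),1:] * [:-of_real (mPhi3 g),1:] * [:-of_real (mPhi3 g),1:]"
proof -
  define k where "k = (1-g) * sqrt (1+g^2) / 2"
  define z where "z = (1-g) / 2"
  have kk: "k^2 = (1-g)^2 * (1+g^2) / 4" unfolding k_def by (simp add: power_mult_distrib power_divide)
  have e1: "mPhi1 g * mPhi2 g = ((1+g^2)/2 * ((1-g)^2/2) + ((1-g)/2)^2) * ((1+g^2)/2 * ((1-g)^2/2) + ((1-g)/2)^2) - ((1+g^2)*(1-g)/2) * ((1-g)^3/2)"
  proof -
    have "mPhi1 g * mPhi2 g = (k^2 - z^2)^2" unfolding mPhi1_def mPhi2_def k_def[symmetric] z_def[symmetric]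
      by (simp add: algebra_simps power2_eq_square)
    also have "\<dots> = ((1-g)^2 * (1+g^2) / 4 - ((1-g)/2)^2)^2" unfolding kk z_def ..
    finally show ?thesis by (simp add: field_simps power2_eq_square power3_eq_cube)
  qed
  have e2: "mPhi1 g + mPhi2 g = 2 * ((1+g^2)/2 * ((1-g)^2/2) + ((1-g)/2)^2)"
  proof -
    have "mPhi1 g + mPhi2 g = 2 * k^2 + 2 * z^2" unfolding mPhi1_def mPhi2_def k_def[symmetric] z_def[symmetric]
      by (simp add: algebra_simps power2_eq_square)
    also have "\<dots> = 2 * ((1+g^2)/2 * ((1-g)^2/2) + ((1-g)/2)^2)" unfolding kk z_def
      by (simp add: field_simps power2_eq_square)
    finally show ?thesis .
  qed
  define pp where "pp = (1+g^2)/2 * ((1-g)^2/2) + ((1-g)/2)^2"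
  define qq where "qq = (1+g^2)*(1-g)/2"
  define rr where "rr = (1-g)^3/2"
  have M: "MPhi g = mk4 [[of_real pp,0,0,of_real qq],[0,of_real (mPhi3 g),0,0],[0,0,of_real (mPhi3 g),0],[of_real rr,0,0,of_real pp]]"
    unfolding MPhi_def pp_def qq_def rr_def mPhi3_def ..
  have c0: "complex_of_real (mPhi1 g) * complex_of_real (mPhi2 g) = of_real pp * of_real pp - of_real qq * of_real rr"
    unfolding of_real_mult[symmetric] of_real_diff[symmetric] e1 pp_def qq_def rr_def ..
  have c1: "complex_of_real (mPhi1 g) + complex_of_real (mPhi2 g) = 2 * of_real pp"
    unfolding of_real_add[symmetric] e2 pp_def by simp
  show ?thesis
    unfolding M charpoly_X lin2 c0 c1 by simp
qed

lemma charpoly_MPsi: "charpoly (MPsi g) = [:0,1:] * [:0,1:] * [:0,1:] * [:-of_real ((1-g)^2),1:]"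
  unfolding charpoly_def det4
  by (simp add: MPsi_def)


lemma proots4: "proots ([:a,1:] * [:b,1:] * [:c,1:] * [:d,1::complex:]) = {#-a,-b,-c,-d#}"
proof -
  have nz: "[:a,1:] \<noteq> 0" "[:b,1:] \<noteq> 0" "[:c,1:] \<noteq> 0" "[:d,1::complex:] \<noteq> 0" by simp_all
  have nz2: "[:a,1:] * [:b,1:] \<noteq> 0" "[:a,1:] * [:b,1:] * [:c,1::complex:] \<noteq> 0"
    using nz by (simp_all add: no_zero_divisors)
  show ?thesis
    by (simp only: proots_mult[OF nz2(2) nz(4)] proots_mult[OF nz2(1) nz(3)] proots_mult[OF nz(1) nz(2)]
      proots_linear_factor) (simp add: add_mset_commute)
qed

lemma conc_Phi: assumes "0 \<le> g" "g \<le> 1" shows "concurrence (rhoPhi g) = (1 - g)^2"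
proof -
  define k where "k = (1-g) * sqrt (1+g^2) / 2"
  define z where "z = (1-g) / 2"
  have z0: "0 \<le> z" using assms unfolding z_def by simp
  have s1: "1 \<le> sqrt (1+g^2)" by simp
  have "(1-g)*1 \<le> (1-g) * sqrt (1+g^2)" by (rule mult_left_mono) (use s1 assms in auto)
  then have kz: "z \<le> k" unfolding k_def z_def by simp
  have b0: "0 \<le> g*(1-g)/2" using assms by simp
  have r1: "sqrt (mPhi1 g) = k + z" unfolding mPhi1_def k_def[symmetric] z_def[symmetric]
    using kz z0 by simp
  have r2: "sqrt (mPhi2 g) = k - z" unfolding mPhi2_def k_def[symmetric] z_def[symmetric]
    using kz by simp
  have r3: "sqrt (mPhi3 g) = g*(1-g)/2" unfolding mPhi3_def using b0 by simp
  have bz: "g*(1-g)/2 \<le> z" unfolding z_def using assms by (simp add: mult_left_le_one_le divide_right_mono)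
  have ms: "image_mset (\<lambda>z. sqrt (Re z)) (proots (charpoly (rhoPhi g ** spin_flip (rhoPhi g))))
     = {#k + z, k - z, g*(1-g)/2, g*(1-g)/2#}"
    unfolding MPhi_eq charpoly_MPhi proots4 by (simp add: r1 r2 r3)
  have "concurrence (rhoPhi g) = max 0 ((k + z) - (k - z) - g*(1-g)/2 - g*(1-g)/2)"
    unfolding concurrence_def ms
    by (rule conc4) (use kz z0 bz b0 in auto)
  also have "(k + z) - (k - z) - g*(1-g)/2 - g*(1-g)/2 = (1 - g)^2" unfolding z_def
    by (simp add: power2_eq_square algebra_simps)
  also have "max 0 ((1 - g)^2) = (1 - g)^2" by simp
  finally show ?thesis .
qed

lemma conc_Psi: assumes "0 \<le> g" "g \<le> 1" shows "concurrence (rhoPsi g) = 1 - g"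
proof -
  have ms: "image_mset (\<lambda>z. sqrt (Re z)) (proots (charpoly (rhoPsi g ** spin_flip (rhoPsi g))))
     = {#1 - g, 0, 0, 0#}"
    unfolding MPsi_eq charpoly_MPsi
    using proots4[of 0 0 0 "- of_real ((1-g)^2)"] assms by (simp add: add_mset_commute)
  have "concurrence (rhoPsi g) = max 0 ((1 - g) - 0 - 0 - 0)"
    unfolding concurrence_def ms
    by (rule conc4) (use assms in auto)
  then show ?thesis using assms by simp
qed

theorem corollary2:
  fixes \<gamma> :: real
  assumes "0 \<le> \<gamma>" and "\<gamma> \<le> 1"
  shows "robustness (AD2 \<gamma> (outer Phi_plus)) = 1 + \<gamma> * (1 - \<gamma>) \<and>
         robustness (AD2 \<gamma> (outer Psi_plus)) = 1 \<and>
         concurrence (AD2 \<gamma> (outer Phi_plus)) = (1 - \<gamma>)\<^sup>2 \<and>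
         concurrence (AD2 \<gamma> (outer Psi_plus)) = 1 - \<gamma>"
  unfolding AD2_Phi[OF assms] AD2_Psi[OF assms]
  using rob_Phi[OF assms] rob_Psi[OF assms] conc_Phi[OF assms] conc_Psi[OF assms] by simp


end
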